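(* Let $(\Pi^0(t))_{t\ge0}$ be a $(\Lambda_0,\Lambda_1)$-coalescent started from singletons, where $(\Lambda_0+\Lambda_1)(\{1\})=0$. Let $\zeta=\inf\{t\ge0:\Pi^0(t)=\{\mathbb{Z}_+,\emptyset,\dots\}\}$ be the fixation time, and define for $n\ge1$ $$\phi(n)=\sum_{k=2}^{n}(k-1)\binom{n}{k}\lambda_{n,k}+\Lambda_0([0,1])\,n,\qquad \lambda_{n,k}=\int_0^1x^{k-2}(1-x)^{n-k}\Lambda_1(dx).$$ Then $\mathbb{E}[\zeta]\le\sum_{n=1}^\infty\frac1{\phi(n)}$. In particular, if this series converges, $\zeta<\infty$ almost surely.
   Context: $\Lambda_0,\Lambda_1$ are finite measures on $[0,1]$. The $(\Lambda_0,\Lambda_1)$-coalescent is a process of partitions of $\mathbb{Z}_+=\{0,1,\dots\}$ (the block containing $0$ is distinguished) whose restriction to each $\{0,\dots,n\}$ is a continuous-time Markov chain in which, when there are $b$ blocks not containing $0$, each $k$-tuple ($2\le k\le b$) of such blocks merges into one block at rate $\lambda_{b,k}=\int_0^1x^{k-2}(1-x)^{b-k}\Lambda_1(dx)$, and each $k$-tuple ($1\le k\le b$) of such blocks merges with the block containing $0$ at rate $\int_0^1x^{k-1}(1-x)^{b-k}\Lambda_0(dx)$; no other transitions occur (convention $0^0=1$). *)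

theory Defs
  imports "HOL-Probability.Probability"
begin

definition is_partition :: "'a set \<Rightarrow> 'a set set \<Rightarrow> bool" where
  "is_partition A P \<longleftrightarrow> {} \<notin> P \<and> \<Union>P = A \<and> (\<forall>B\<in>P. \<forall>C\<in>P. B \<noteq> C \<longrightarrow> B \<inter> C = {})"

definition partitions_upto :: "nat \<Rightarrow> nat set set set" where
  "partitions_upto n = {P. is_partition {..n} P}"

definition restr :: "nat \<Rightarrow> nat set set \<Rightarrow> nat set set" where
  "restr n P = (\<lambda>B. B \<inter> {..n}) ` P - {{}}"

definition singletons_upto :: "nat \<Rightarrow> nat set set" where
  "singletons_upto n = (\<lambda>i. {i}) ` {..n}"

definition nzb :: "nat set set \<Rightarrow> nat set set" where
  "nzb P = {B\<in>P. 0 \<notin> B}"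

definition merge :: "nat set set \<Rightarrow> nat set set \<Rightarrow> nat set set" where
  "merge P K = (P - K) \<union> {\<Union>K}"

definition merge0 :: "nat set set \<Rightarrow> nat set set \<Rightarrow> nat set set" where
  "merge0 P K = {B\<in>P. B \<notin> K \<and> 0 \<notin> B} \<union> {\<Union>{B\<in>P. 0 \<in> B} \<union> \<Union>K}"

text \<open>lambda_{b,k} = int x^(k-2) (1-x)^(b-k) Lambda_1(dx)  (note 0^0 = 1).\<close>
definition lam :: "real measure \<Rightarrow> nat \<Rightarrow> nat \<Rightarrow> real" where
  "lam \<Lambda>1 b k = (\<integral>x. x ^ (k - 2) * (1 - x) ^ (b - k) \<partial>\<Lambda>1)"

text \<open>Rate at which a given k-tuple of blocks merges with the block of 0.\<close>
definition mu :: "real measure \<Rightarrow> nat \<Rightarrow> nat \<Rightarrow> real" where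
  "mu \<Lambda>0 b k = (\<integral>x. x ^ (k - 1) * (1 - x) ^ (b - k) \<partial>\<Lambda>0)"

definition rate :: "real measure \<Rightarrow> real measure \<Rightarrow> nat set set \<Rightarrow> nat set set \<Rightarrow> real" where
  "rate \<Lambda>0 \<Lambda>1 P P' =
     (\<Sum>K\<in>{K. K \<subseteq> nzb P \<and> 2 \<le> card K \<and> merge P K = P'}. lam \<Lambda>1 (card (nzb P)) (card K))
   + (\<Sum>K\<in>{K. K \<subseteq> nzb P \<and> 1 \<le> card K \<and> merge0 P K = P'}. mu \<Lambda>0 (card (nzb P)) (card K))"

definition gen :: "real measure \<Rightarrow> real measure \<Rightarrow> nat \<Rightarrow> nat set set \<Rightarrow> nat set set \<Rightarrow> real" where
  "gen \<Lambda>0 \<Lambda>1 n P P' =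
     (if P = P' then - (\<Sum>P''\<in>partitions_upto n - {P}. rate \<Lambda>0 \<Lambda>1 P P'') else rate \<Lambda>0 \<Lambda>1 P P')"

fun gpow :: "real measure \<Rightarrow> real measure \<Rightarrow> nat \<Rightarrow> nat \<Rightarrow> nat set set \<Rightarrow> nat set set \<Rightarrow> real" where
  "gpow \<Lambda>0 \<Lambda>1 n 0 P P' = (if P = P' then 1 else 0)"
| "gpow \<Lambda>0 \<Lambda>1 n (Suc k) P P' = (\<Sum>C\<in>partitions_upto n. gen \<Lambda>0 \<Lambda>1 n P C * gpow \<Lambda>0 \<Lambda>1 n k C P')"

definition trans_prob :: "real measure \<Rightarrow> real measure \<Rightarrow> nat \<Rightarrow> real \<Rightarrow> nat set set \<Rightarrow> nat set set \<Rightarrow> real" where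
  "trans_prob \<Lambda>0 \<Lambda>1 n t P P' = (\<Sum>k. t ^ k / fact k * gpow \<Lambda>0 \<Lambda>1 n k P P')"

text \<open>Finite-dimensional distribution of the chain started at s0 at time t0,
  visiting the states ss at the (increasing) times ts.\<close>
fun chain_prob :: "real measure \<Rightarrow> real measure \<Rightarrow> nat \<Rightarrow> real \<Rightarrow> nat set set \<Rightarrow> real list \<Rightarrow> nat set set list \<Rightarrow> real" where
  "chain_prob \<Lambda>0 \<Lambda>1 n t0 s0 (t # ts) (s # ss) =
     trans_prob \<Lambda>0 \<Lambda>1 n (t - t0) s0 s * chain_prob \<Lambda>0 \<Lambda>1 n t s ts ss"
| "chain_prob \<Lambda>0 \<Lambda>1 n t0 s0 _ _ = 1"

text \<open>Pi is a (Lambda_0,Lambda_1)-coalescent started from singletons on the probability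
  space M: it takes values in partitions of Z_+, every restriction to {0..n} is
  measurable, has cadlag (piecewise constant) paths, and has the finite-dimensional
  distributions of the continuous-time Markov chain with the above rates started
  from the singleton partition.\<close>
definition is_coalescent :: "real measure \<Rightarrow> real measure \<Rightarrow> 'w measure \<Rightarrow> (real \<Rightarrow> 'w \<Rightarrow> nat set set) \<Rightarrow> bool" where
  "is_coalescent \<Lambda>0 \<Lambda>1 M X \<longleftrightarrow>
     (\<forall>t\<ge>0. \<forall>\<omega>\<in>space M. is_partition UNIV (X t \<omega>))
   \<and> (\<forall>n t s. t \<ge> 0 \<longrightarrow> {\<omega>\<in>space M. restr n (X t \<omega>) = s} \<in> sets M)
   \<and> (\<forall>n. \<forall>\<omega>\<in>space M. \<forall>t\<ge>0.
        (\<exists>e>0. \<forall>u. t \<le> u \<and> u < t + e \<longrightarrow> restr n (X u \<omega>) = restr n (X t \<omega>))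
      \<and> (t > 0 \<longrightarrow> (\<exists>e>0. \<exists>S. \<forall>u. t - e < u \<and> u < t \<longrightarrow> restr n (X u \<omega>) = S)))
   \<and> (\<forall>n ts ss. sorted_wrt (<) ts \<longrightarrow> (\<forall>t\<in>set ts. 0 \<le> t) \<longrightarrow> length ss = length ts \<longrightarrow>
        measure M {\<omega>\<in>space M. \<forall>i<length ts. restr n (X (ts ! i) \<omega>) = ss ! i}
        = chain_prob \<Lambda>0 \<Lambda>1 n 0 (singletons_upto n) ts ss)"

text \<open>Fixation time: first time the partition consists of the single block Z_+
  (infinite if this never happens).\<close>
definition fixation_time :: "(real \<Rightarrow> 'w \<Rightarrow> nat set set) \<Rightarrow> 'w \<Rightarrow> ennreal" where
  "fixation_time X \<omega> = (INF t\<in>{t. 0 \<le> t \<and> X t \<omega> = {UNIV}}. ennreal t)"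

definition phi :: "real measure \<Rightarrow> real measure \<Rightarrow> nat \<Rightarrow> real" where
  "phi \<Lambda>0 \<Lambda>1 n = (\<Sum>k=2..n. real (k - 1) * real (n choose k) * lam \<Lambda>1 n k) + measure \<Lambda>0 {0..1} * real n"

end

theory Submission
  imports Defs
begin


lemma parts_finite: "finite (partitions_upto n)"
proof -
  have "partitions_upto n \<subseteq> Pow (Pow {..n})"
    unfolding partitions_upto_def is_partition_def by auto
  then show ?thesis by (rule finite_subset) auto
qed

lemma part_finite: "P \<in> partitions_upto n \<Longrightarrow> finite P"
proof -
  assume "P \<in> partitions_upto n"
  then have "P \<subseteq> Pow {..n}" unfolding partitions_upto_def is_partition_def by auto
  then show "finite P" by (rule finite_subset) auto
qed

lemma nzb_finite: "P \<in> partitions_upto n \<Longrightarrow> finite (nzb P)"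
  unfolding nzb_def using part_finite by auto

lemma nzb_sub: "nzb P \<subseteq> P" unfolding nzb_def by auto

lemma one_parts: "{{..n}} \<in> partitions_upto n"
  unfolding partitions_upto_def is_partition_def by auto

lemma nzb_one: "nzb {{..n}} = {}" unfolding nzb_def by auto

lemma s0_parts: "singletons_upto n \<in> partitions_upto n"
  unfolding partitions_upto_def is_partition_def singletons_upto_def by auto

lemma card_nzb_s0: "card (nzb (singletons_upto n)) = n"
proof -
  have "nzb (singletons_upto n) = (\<lambda>i. {i}) ` {1..n}"
    unfolding nzb_def singletons_upto_def by (auto simp: image_iff Suc_le_eq)
  then show ?thesis by (simp add: card_image)
qed

lemma nzb_empty_one:
  assumes "P \<in> partitions_upto n" "nzb P = {}" shows "P = {{..n}}"
proof -
  have p: "{} \<notin> P" "\<Union>P = {..n}" "\<forall>B\<in>P. \<forall>C\<in>P. B \<noteq> C \<longrightarrow> B \<inter> C = {}"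
    using assms(1) unfolding partitions_upto_def is_partition_def by auto
  have all0: "\<forall>B\<in>P. 0 \<in> B" using assms(2) unfolding nzb_def by auto
  have same: "\<forall>B\<in>P. \<forall>C\<in>P. B = C" using p(3) all0 by blast
  obtain B where B: "B \<in> P" using p(2) by auto
  have "P = {B}" using same B by auto
  then show ?thesis using p(2) by auto
qed

lemma merge_props:
  assumes P: "P \<in> partitions_upto n" and K: "K \<subseteq> nzb P" "K \<noteq> {}"
  shows "merge P K \<in> partitions_upto n"
    "card (nzb (merge P K)) = card (nzb P) - card K + 1"
proof -
  have p: "{} \<notin> P" "\<Union>P = {..n}" "\<forall>B\<in>P. \<forall>C\<in>P. B \<noteq> C \<longrightarrow> B \<inter> C = {}"
    using P unfolding partitions_upto_def is_partition_def by auto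
  have KP: "K \<subseteq> P" using K nzb_sub by blast
  have U0: "0 \<notin> \<Union>K" using K unfolding nzb_def by auto
  have Une: "\<Union>K \<noteq> {}"
  proof -
    obtain C where C: "C \<in> K" using K by auto
    then have "C \<noteq> {}" using KP p(1) by auto
    then show ?thesis using C by auto
  qed
  have Unot: "\<Union>K \<notin> P - K"
  proof
    assume a: "\<Union>K \<in> P - K"
    obtain C where C: "C \<in> K" using K by auto
    then have ne: "C \<noteq> \<Union>K" using a by auto
    have CP: "C \<in> P" "\<Union>K \<in> P" using C KP a by auto
    have "C \<inter> \<Union>K = {}" using p(3)[rule_format, OF CP ne] .
    moreover have "C \<noteq> {}" using C KP p(1) by auto
    ultimately show False using C by auto
  qed
  show "merge P K \<in> partitions_upto n"
    unfolding partitions_upto_def is_partition_def merge_def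
  proof (intro CollectI conjI)
    show "{} \<notin> P - K \<union> {\<Union> K}" using p(1) Une by auto
    show "\<Union> (P - K \<union> {\<Union> K}) = {..n}"
    proof
      show "\<Union> (P - K \<union> {\<Union> K}) \<subseteq> {..n}" using p(2) KP by auto
      show "{..n} \<subseteq> \<Union> (P - K \<union> {\<Union> K})"
      proof
        fix x assume "x \<in> {..n}"
        then obtain B where "B \<in> P" "x \<in> B" using p(2) by auto
        then show "x \<in> \<Union> (P - K \<union> {\<Union> K})" by (cases "B \<in> K") auto
      qed
    qed
    show "\<forall>B\<in>P - K \<union> {\<Union> K}. \<forall>C\<in>P - K \<union> {\<Union> K}. B \<noteq> C \<longrightarrow> B \<inter> C = {}"
    proof (intro ballI impI)
      fix B C assume B: "B \<in> P - K \<union> {\<Union> K}" and C: "C \<in> P - K \<union> {\<Union> K}" and ne: "B \<noteq> C"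
      have pd: "\<And>B C. B\<in>P \<Longrightarrow> C\<in>P \<Longrightarrow> B\<noteq>C \<Longrightarrow> B\<inter>C={}" using p(3) by blast
      have dK: "\<And>B. B \<in> P - K \<Longrightarrow> B \<inter> \<Union>K = {}"
      proof -
        fix B assume b: "B \<in> P - K"
        have "\<And>C. C \<in> K \<Longrightarrow> B \<inter> C = {}"
        proof -
          fix C assume c: "C \<in> K"
          then have "C \<in> P" "B \<noteq> C" using KP b by auto
          then show "B \<inter> C = {}" using pd b by auto
        qed
        then show "B \<inter> \<Union>K = {}" by auto
      qed
      show "B \<inter> C = {}"
      proof (cases "B = \<Union>K")
        case True
        then have "C \<in> P - K" using C ne by auto
        then show ?thesis using dK True by blast
      next
        case False
        then have B': "B \<in> P - K" using B by auto
        show ?thesis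
        proof (cases "C = \<Union>K")
          case True then show ?thesis using dK B' by blast
        next
          case False then have "C \<in> P - K" using C by auto
          then show ?thesis using B' p(3) ne by blast
        qed
      qed
    qed
  qed
  have "nzb (merge P K) = (nzb P - K) \<union> {\<Union>K}"
    unfolding nzb_def merge_def using U0 by auto
  moreover have "\<Union>K \<notin> nzb P - K" using Unot nzb_sub by blast
  moreover have "finite (nzb P)" using nzb_finite P .
  ultimately have "card (nzb (merge P K)) = card (nzb P - K) + 1" by simp
  also have "card (nzb P - K) = card (nzb P) - card K"
    using K `finite (nzb P)` by (simp add: card_Diff_subset finite_subset)
  finally show "card (nzb (merge P K)) = card (nzb P) - card K + 1" .
qed

lemma merge0_props:
  assumes P: "P \<in> partitions_upto n" and K: "K \<subseteq> nzb P"
  shows "merge0 P K \<in> partitions_upto n"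
    "card (nzb (merge0 P K)) = card (nzb P) - card K"
proof -
  have p: "{} \<notin> P" "\<Union>P = {..n}" "\<forall>B\<in>P. \<forall>C\<in>P. B \<noteq> C \<longrightarrow> B \<inter> C = {}"
    using P unfolding partitions_upto_def is_partition_def by auto
  have KP: "K \<subseteq> P" using K nzb_sub by blast
  define Z where "Z = \<Union>{B\<in>P. 0 \<in> B} \<union> \<Union>K"
  have Z0: "0 \<in> Z" using p(2) unfolding Z_def by auto
  have K0: "\<forall>B\<in>K. 0 \<notin> B" using K unfolding nzb_def by auto
  have m: "merge0 P K = {B\<in>P. B \<notin> K \<and> 0 \<notin> B} \<union> {Z}" unfolding merge0_def Z_def by simp
  show "merge0 P K \<in> partitions_upto n"
    unfolding partitions_upto_def is_partition_def m
  proof (intro CollectI conjI)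
    show "{} \<notin> {B \<in> P. B \<notin> K \<and> 0 \<notin> B} \<union> {Z}" using p(1) Z0 by auto
    show "\<Union> ({B \<in> P. B \<notin> K \<and> 0 \<notin> B} \<union> {Z}) = {..n}"
    proof
      show "\<Union> ({B \<in> P. B \<notin> K \<and> 0 \<notin> B} \<union> {Z}) \<subseteq> {..n}"
        using p(2) KP unfolding Z_def by auto
      show "{..n} \<subseteq> \<Union> ({B \<in> P. B \<notin> K \<and> 0 \<notin> B} \<union> {Z})"
      proof
        fix x assume "x \<in> {..n}"
        then obtain B where "B \<in> P" "x \<in> B" using p(2) by auto
        then show "x \<in> \<Union> ({B \<in> P. B \<notin> K \<and> 0 \<notin> B} \<union> {Z})"
          unfolding Z_def by (cases "B \<in> K"; cases "0 \<in> B") auto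
      qed
    qed
    show "\<forall>B\<in>{B \<in> P. B \<notin> K \<and> 0 \<notin> B} \<union> {Z}. \<forall>C\<in>{B \<in> P. B \<notin> K \<and> 0 \<notin> B} \<union> {Z}. B \<noteq> C \<longrightarrow> B \<inter> C = {}"
    proof (intro ballI impI)
      fix B C assume B: "B \<in> {B \<in> P. B \<notin> K \<and> 0 \<notin> B} \<union> {Z}" and C: "C \<in> {B \<in> P. B \<notin> K \<and> 0 \<notin> B} \<union> {Z}" and ne: "B \<noteq> C"
      have dZ: "\<And>B. B \<in> P \<Longrightarrow> B \<notin> K \<Longrightarrow> 0 \<notin> B \<Longrightarrow> B \<inter> Z = {}"
      proof -
        fix B assume a: "B \<in> P" "B \<notin> K" "0 \<notin> B"
        have "\<forall>C\<in>{B\<in>P. 0 \<in> B} \<union> K. B \<inter> C = {}"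
        proof
          fix C assume "C \<in> {B\<in>P. 0 \<in> B} \<union> K"
          then have "C \<in> P" "C \<noteq> B" using a KP by auto
          then show "B \<inter> C = {}" using a(1) p(3) by blast
        qed
        then show "B \<inter> Z = {}" unfolding Z_def by blast
      qed
      show "B \<inter> C = {}"
      proof (cases "B = Z")
        case True
        then have "C \<in> P" "C \<notin> K" "0 \<notin> C" using C ne by auto
        then show ?thesis using dZ True by blast
      next
        case False
        then have B': "B \<in> P" "B \<notin> K" "0 \<notin> B" using B by auto
        show ?thesis
        proof (cases "C = Z")
          case True then show ?thesis using dZ B' by blast
        next
          case False then have "C \<in> P" using C by auto
          then show ?thesis using B' p(3) ne by blast
        qed
      qed
    qed
  qed
  have "nzb (merge0 P K) = nzb P - K" unfolding nzb_def m using Z0 by auto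
  then show "card (nzb (merge0 P K)) = card (nzb P) - card K"
    using K nzb_finite[OF P] by (simp add: card_Diff_subset finite_subset)
qed



definition psi :: "nat \<Rightarrow> real \<Rightarrow> real" where
  "psi b x = (\<Sum>k=2..b. real (k - 1) * real (b choose k) * (x ^ (k - 2) * (1 - x) ^ (b - k)))"

lemma binom_one: "(\<Sum>k\<le>m. real (m choose k) * x ^ k * (1 - x) ^ (m - k)) = (1::real)"
  using binomial_ring[of x "1 - x" m] by simp

lemma mean_poly: "(\<Sum>k=1..b. real k * real (b choose k) * (x ^ (k - 1) * (1 - x) ^ (b - k))) = real b"
proof (cases b)
  case 0 then show ?thesis by simp
next
  case (Suc m)
  have "(\<Sum>k=1..b. real k * real (b choose k) * (x ^ (k - 1) * (1 - x) ^ (b - k)))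
      = (\<Sum>k=1..Suc m. real b * (real (m choose (k - 1)) * x ^ (k - 1) * (1 - x) ^ (Suc m - k)))"
  proof (rule sum.cong)
    show "{1..b} = {1..Suc m}" using Suc by simp
  next
    fix k assume k: "k \<in> {1..Suc m}"
    have "k * (b choose k) = b * (m choose (k - 1))"
      using times_binomial_minus1_eq[of k b] k Suc by auto
    then have "real k * real (b choose k) = real b * real (m choose (k - 1))"
      by (metis of_nat_mult)
    then show "real k * real (b choose k) * (x ^ (k - 1) * (1 - x) ^ (b - k)) =
      real b * (real (m choose (k - 1)) * x ^ (k - 1) * (1 - x) ^ (Suc m - k))"
      using Suc by (simp add: algebra_simps)
  qed
  also have "\<dots> = real b * (\<Sum>k=1..Suc m. real (m choose (k - 1)) * x ^ (k - 1) * (1 - x) ^ (Suc m - k))"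
    by (simp only: sum_distrib_left)
  also have "(\<Sum>k=1..Suc m. real (m choose (k - 1)) * x ^ (k - 1) * (1 - x) ^ (Suc m - k))
      = (\<Sum>k=0..m. real (m choose k) * x ^ k * (1 - x) ^ (m - k))"
    by (simp only: One_nat_def sum.shift_bounds_cl_Suc_ivl) simp
  also have "\<dots> = 1" using binom_one[of m x] by (simp add: atMost_atLeast0)
  finally show ?thesis by simp
qed

lemma psi_identity: "x^2 * psi b x = real b * x - 1 + (1 - x) ^ b"
proof (cases b)
  case 0 then show ?thesis by (simp add: psi_def)
next
  case (Suc m)
  have A: "(\<Sum>k\<le>b. real (b choose k) * x ^ k * (1 - x) ^ (b - k)) = 1" by (rule binom_one)
  have B: "(\<Sum>k\<le>b. real k * real (b choose k) * x ^ k * (1 - x) ^ (b - k)) = real b * x"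
  proof -
    have "(\<Sum>k\<le>b. real k * real (b choose k) * x ^ k * (1 - x) ^ (b - k))
        = (\<Sum>k=1..b. real k * real (b choose k) * x ^ k * (1 - x) ^ (b - k))"
      by (rule sum.mono_neutral_right) auto
    also have "\<dots> = (\<Sum>k=1..b. x * (real k * real (b choose k) * (x ^ (k - 1) * (1 - x) ^ (b - k))))"
    proof (rule sum.cong[OF refl])
      fix k assume "k \<in> {1..b}"
      then have "x ^ k = x * x ^ (k - 1)" by (cases k) auto
      then show "real k * real (b choose k) * x ^ k * (1 - x) ^ (b - k) =
        x * (real k * real (b choose k) * (x ^ (k - 1) * (1 - x) ^ (b - k)))" by simp
    qed
    also have "\<dots> = x * (\<Sum>k=1..b. real k * real (b choose k) * (x ^ (k - 1) * (1 - x) ^ (b - k)))"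
      by (simp add: sum_distrib_left)
    also have "\<dots> = x * real b" by (simp only: mean_poly)
    finally show ?thesis by simp
  qed
  have split: "{..b} = {0, 1} \<union> {2..b}" using Suc by auto
  have "(\<Sum>k\<le>b. (real k - 1) * real (b choose k) * x ^ k * (1 - x) ^ (b - k))
      = (\<Sum>k\<le>b. real k * real (b choose k) * x ^ k * (1 - x) ^ (b - k))
        - (\<Sum>k\<le>b. real (b choose k) * x ^ k * (1 - x) ^ (b - k))"
    by (simp add: sum_subtractf[symmetric] algebra_simps)
  also have "\<dots> = real b * x - 1" using A B by simp
  finally have C: "(\<Sum>k\<le>b. (real k - 1) * real (b choose k) * x ^ k * (1 - x) ^ (b - k)) = real b * x - 1" .
  have "(\<Sum>k\<le>b. (real k - 1) * real (b choose k) * x ^ k * (1 - x) ^ (b - k))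
      = - ((1 - x) ^ b) + (\<Sum>k=2..b. (real k - 1) * real (b choose k) * x ^ k * (1 - x) ^ (b - k))"
    unfolding split by (subst sum.union_disjoint) auto
  moreover have "(\<Sum>k=2..b. (real k - 1) * real (b choose k) * x ^ k * (1 - x) ^ (b - k)) = x^2 * psi b x"
    unfolding psi_def sum_distrib_left
  proof (rule sum.cong[OF refl])
    fix k assume k: "k \<in> {2..b}"
    then have "x ^ k = x^2 * x ^ (k - 2)" by (metis le_add_diff_inverse power_add atLeastAtMost_iff)
    moreover have "real (k - 1) = real k - 1" using k by auto
    ultimately show "(real k - 1) * real (b choose k) * x ^ k * (1 - x) ^ (b - k) =
      x\<^sup>2 * (real (k - 1) * real (b choose k) * (x ^ (k - 2) * (1 - x) ^ (b - k)))" by simp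
  qed
  ultimately show ?thesis using C by simp
qed

lemma psi_zero: "psi b 0 = real (b choose 2)"
proof -
  have "psi b 0 = (\<Sum>k=2..b. if k = 2 then real (b choose 2) else 0)"
    unfolding psi_def by (rule sum.cong) auto
  also have "\<dots> = real (b choose 2)"
    by (cases "2 \<le> b") (auto simp: sum.delta)
  finally show ?thesis .
qed

lemma psi_mono_Suc:
  assumes "0 \<le> x" "x \<le> 1" shows "psi b x \<le> psi (Suc b) x"
proof (cases "x = 0")
  case True
  have "(b choose 2) \<le> (Suc b choose 2)"
    by (simp add: numeral_2_eq_2)
  then show ?thesis using True psi_zero by simp
next
  case False
  then have xp: "x > 0" using assms by auto
  have "x^2 * psi (Suc b) x - x^2 * psi b x = x * (1 - (1 - x) ^ b)"
    unfolding psi_identity by (simp add: algebra_simps)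
  moreover have "(1 - x) ^ b \<le> 1" using assms by (simp add: power_le_one)
  ultimately have "x^2 * (psi (Suc b) x - psi b x) \<ge> 0" using xp by (simp add: right_diff_distrib)
  then show ?thesis using xp by (simp add: zero_le_mult_iff)
qed

lemma psi_mono:
  assumes "0 \<le> x" "x \<le> 1" "b \<le> b'" shows "psi b x \<le> psi b' x"
  using assms(3)
proof (induction b' rule: dec_induct)
  case base then show ?case by simp
next
  case (step m) then show ?case using psi_mono_Suc[OF assms(1,2), of m] by simp
qed

locale lmeas =
  fixes L :: "real measure"
  assumes fin: "finite_measure L" and sets: "sets L = sets borel" and out: "emeasure L (- {0..1}) = 0"
begin

lemma space_L: "space L = UNIV"
  using sets_eq_imp_space_eq[OF sets] by simp

lemma AE01: "AE x in L. x \<in> {0..1}"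
proof (rule AE_I')
  show "- {0..1} \<in> null_sets L" using out sets by (simp add: null_sets_def)
  show "{x \<in> space L. \<not> x \<in> {0..1}} \<subseteq> - {0..1}" by auto
qed

lemma meas_cong: "borel_measurable L = borel_measurable borel"
  by (rule measurable_cong_sets[OF sets refl])

lemma poly_integrable: "integrable L (\<lambda>x. x ^ a * (1 - x) ^ c)"
proof (rule finite_measure.integrable_const_bound[OF fin, where B=1])
  show "AE x in L. norm (x ^ a * (1 - x) ^ c) \<le> 1"
    using AE01 by eventually_elim (auto simp: abs_mult power_abs intro!: mult_le_one power_le_one)
  show "(\<lambda>x. x ^ a * (1 - x) ^ c) \<in> borel_measurable L" unfolding meas_cong by measurable
qed

lemma poly_integral_nonneg: "0 \<le> (\<integral>x. x ^ a * (1 - x) ^ c \<partial>L)"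
  by (rule integral_nonneg_AE) (use AE01 in eventually_elim, auto)

lemma measure_total: "measure L UNIV = measure L {0..1}"
proof -
  have "emeasure L UNIV = emeasure L {0..1} + emeasure L (- {0..1})"
    using sets by (subst plus_emeasure) (auto simp: space_L[symmetric])
  then have "emeasure L UNIV = emeasure L {0..1}" using out by simp
  then show ?thesis unfolding measure_def by simp
qed

lemma psi_integral: "(\<Sum>k=2..b. real (k - 1) * real (b choose k) * (\<integral>x. x ^ (k - 2) * (1 - x) ^ (b - k) \<partial>L))
   = (\<integral>x. psi b x \<partial>L)"
  unfolding psi_def
  by (subst Bochner_Integration.integral_sum) (auto intro!: poly_integrable)

lemma psi_integrable: "integrable L (psi b)"
  unfolding psi_def by (auto intro!: poly_integrable)

end



lemma group_card:
  assumes "finite B"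
  shows "(\<Sum>K\<in>{K. K \<subseteq> B \<and> a \<le> card K}. w (card K)) = (\<Sum>k=a..card B. real (card B choose k) * w k)"
proof -
  have fin: "finite {K. K \<subseteq> B \<and> a \<le> card K}" using assms by (auto intro: finite_subset[of _ "Pow B"])
  have img: "card ` {K. K \<subseteq> B \<and> a \<le> card K} \<subseteq> {a..card B}"
    using assms by (auto intro: card_mono)
  have "(\<Sum>K\<in>{K. K \<subseteq> B \<and> a \<le> card K}. w (card K))
     = (\<Sum>k\<in>{a..card B}. \<Sum>K\<in>{K \<in> {K. K \<subseteq> B \<and> a \<le> card K}. card K = k}. w (card K))"
    by (rule sum.group[OF fin _ img, symmetric]) simp
  also have "\<dots> = (\<Sum>k=a..card B. real (card B choose k) * w k)"
  proof (rule sum.cong[OF refl])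
    fix k assume k: "k \<in> {a..card B}"
    have "{K \<in> {K. K \<subseteq> B \<and> a \<le> card K}. card K = k} = {K. K \<subseteq> B \<and> card K = k}"
      using k by auto
    then have "(\<Sum>K\<in>{K \<in> {K. K \<subseteq> B \<and> a \<le> card K}. card K = k}. w (card K))
        = (\<Sum>K\<in>{K. K \<subseteq> B \<and> card K = k}. w k)" by simp
    also have "\<dots> = real (card B choose k) * w k" using n_subsets[OF assms, of k] by simp
    finally show "(\<Sum>K\<in>{K \<in> {K. K \<subseteq> B \<and> a \<le> card K}. card K = k}. w (card K)) = real (card B choose k) * w k" .
  qed
  finally show ?thesis .
qed

lemma gen_row0: assumes "P \<in> partitions_upto n" shows "(\<Sum>C\<in>partitions_upto n. gen L0 L1 n P C) = 0"
proof -
  have "(\<Sum>C\<in>partitions_upto n. gen L0 L1 n P C) = gen L0 L1 n P P + (\<Sum>C\<in>partitions_upto n - {P}. gen L0 L1 n P C)"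
    using assms parts_finite by (simp add: sum.remove)
  also have "(\<Sum>C\<in>partitions_upto n - {P}. gen L0 L1 n P C) = (\<Sum>C\<in>partitions_upto n - {P}. rate L0 L1 P C)"
    unfolding gen_def by (rule sum.cong) auto
  finally show ?thesis unfolding gen_def by simp
qed

locale coal =
  fixes L0 L1 :: "real measure"
  assumes l0: "lmeas L0" and l1: "lmeas L1" and pos: "\<And>m. 1 \<le> m \<Longrightarrow> phi L0 L1 m > 0"
begin

lemma lam_nonneg: "0 \<le> lam L1 b k"
  unfolding lam_def using lmeas.poly_integral_nonneg[OF l1] .

lemma mu_nonneg: "0 \<le> mu L0 b k"
  unfolding mu_def using lmeas.poly_integral_nonneg[OF l0] .

lemma mass_nonneg: "0 \<le> measure L0 {0..1}" by simp

lemma phi_psi: "phi L0 L1 b = (\<integral>x. psi b x \<partial>L1) + measure L0 {0..1} * real b"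
  unfolding phi_def lam_def using lmeas.psi_integral[OF l1] by simp

lemma phi_mono: assumes "b \<le> b'" shows "phi L0 L1 b \<le> phi L0 L1 b'"
proof -
  have "(\<integral>x. psi b x \<partial>L1) \<le> (\<integral>x. psi b' x \<partial>L1)"
    by (rule integral_mono_AE[OF lmeas.psi_integrable[OF l1] lmeas.psi_integrable[OF l1]])
       (use lmeas.AE01[OF l1] in eventually_elim, auto intro: psi_mono[OF _ _ assms])
  moreover have "measure L0 {0..1} * real b \<le> measure L0 {0..1} * real b'"
    using assms by (simp add: mult_left_mono)
  ultimately show ?thesis unfolding phi_psi by simp
qed

lemma mu_sum: "(\<Sum>k=1..b. real k * real (b choose k) * mu L0 b k) = real b * measure L0 {0..1}"
proof -
  have "(\<Sum>k=1..b. real k * real (b choose k) * mu L0 b k)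
      = (\<integral>x. (\<Sum>k=1..b. real k * real (b choose k) * (x ^ (k - 1) * (1 - x) ^ (b - k))) \<partial>L0)"
    unfolding mu_def
    by (subst Bochner_Integration.integral_sum) (auto intro!: lmeas.poly_integrable[OF l0])
  also have "\<dots> = (\<integral>x. real b \<partial>L0)" by (simp only: mean_poly)
  also have "\<dots> = real b * measure L0 UNIV" using lmeas.space_L[OF l0] by simp
  also have "\<dots> = real b * measure L0 {0..1}" using lmeas.measure_total[OF l0] by simp
  finally show ?thesis .
qed

definition f :: "nat \<Rightarrow> real" where "f b = (\<Sum>m=1..b. 1 / phi L0 L1 m)"

lemma f_Suc: "f (Suc c) = f c + 1 / phi L0 L1 (Suc c)"
  unfolding f_def by simp

lemma f_nonneg: "0 \<le> f b"
  unfolding f_def using pos by (auto intro!: sum_nonneg simp: less_imp_le)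

lemma f_diff: assumes "j \<le> b" shows "real j / phi L0 L1 b \<le> f b - f (b - j)"
  using assms
proof (induction j)
  case 0 then show ?case by simp
next
  case (Suc j)
  define c where "c = b - Suc j"
  have bj: "b - j = Suc c" using Suc.prems unfolding c_def by simp
  have "f b - f (b - Suc j) = (f b - f (b - j)) + 1 / phi L0 L1 (Suc c)"
    unfolding c_def[symmetric] bj f_Suc by simp
  moreover have "1 / phi L0 L1 b \<le> 1 / phi L0 L1 (Suc c)"
    using pos[of "Suc c"] pos[of b] phi_mono[of "Suc c" b] bj Suc.prems by (intro divide_left_mono) auto
  moreover have "real j / phi L0 L1 b \<le> f b - f (b - j)" using Suc by simp
  ultimately show ?case by (simp add: add_divide_distrib)
qed

definition F :: "nat set set \<Rightarrow> real" where "F P = f (card (nzb P))"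

lemma rate_nonneg: "0 \<le> rate L0 L1 P P'"
  unfolding rate_def by (intro add_nonneg_nonneg sum_nonneg lam_nonneg mu_nonneg)

lemma gen_offdiag_nonneg: "P \<noteq> C \<Longrightarrow> 0 \<le> gen L0 L1 n P C"
  unfolding gen_def using rate_nonneg by simp

lemma rate_empty: assumes "nzb P = {}" shows "rate L0 L1 P C = 0"
proof -
  have e1: "{K. K \<subseteq> nzb P \<and> 2 \<le> card K \<and> merge P K = C} = {}" using assms by auto
  have e2: "{K. K \<subseteq> nzb P \<and> 1 \<le> card K \<and> merge0 P K = C} = {}" using assms by auto
  show ?thesis unfolding rate_def e1 e2 by simp
qed

lemma gen_empty: assumes "nzb P = {}" shows "gen L0 L1 n P C = 0"
proof (cases "P = C")
  case True
  have "(\<Sum>P''\<in>partitions_upto n - {P}. rate L0 L1 P P'') = 0"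
    using rate_empty[OF assms] by simp
  then show ?thesis unfolding gen_def using True by simp
next
  case False then show ?thesis unfolding gen_def using rate_empty[OF assms] by simp
qed

lemma QF_bound:
  assumes P: "P \<in> partitions_upto n"
  shows "(\<Sum>C\<in>partitions_upto n. gen L0 L1 n P C * F C) \<le> (if nzb P = {} then 0 else -1)"
proof (cases "nzb P = {}")
  case True then show ?thesis using gen_empty by simp
next
  case False
  define b where "b = card (nzb P)"
  have finB: "finite (nzb P)" using nzb_finite[OF P] .
  have b1: "1 \<le> b" using False finB unfolding b_def by (simp add: Suc_le_eq card_gt_0_iff)
  have phib: "phi L0 L1 b > 0" using pos b1 by simp
  define A1 where "A1 = {K. K \<subseteq> nzb P \<and> 2 \<le> card K}"
  define A0 where "A0 = {K. K \<subseteq> nzb P \<and> 1 \<le> card K}"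
  have finA1: "finite A1" unfolding A1_def using finB by (auto intro: finite_subset[of _ "Pow (nzb P)"])
  have finA0: "finite A0" unfolding A0_def using finB by (auto intro: finite_subset[of _ "Pow (nzb P)"])
  have A1ne: "K \<in> A1 \<Longrightarrow> K \<subseteq> nzb P \<and> K \<noteq> {}" for K unfolding A1_def by auto
  have A0ne: "K \<in> A0 \<Longrightarrow> K \<subseteq> nzb P" for K unfolding A0_def by auto
  have img1: "(\<lambda>K. merge P K) ` A1 \<subseteq> partitions_upto n" using merge_props(1)[OF P] A1ne by blast
  have img0: "(\<lambda>K. merge0 P K) ` A0 \<subseteq> partitions_upto n" using merge0_props(1)[OF P] A0ne by blast
  define h1 where "h1 K = lam L1 b (card K) * (F (merge P K) - F P)" for K
  define h0 where "h0 K = mu L0 b (card K) * (F (merge0 P K) - F P)" for K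
  have "(\<Sum>C\<in>partitions_upto n. gen L0 L1 n P C * F C)
      = (\<Sum>C\<in>partitions_upto n. gen L0 L1 n P C * (F C - F P))"
    using gen_row0[OF P] by (simp add: right_diff_distrib sum_subtractf sum_distrib_right[symmetric])
  also have "\<dots> = (\<Sum>C\<in>partitions_upto n. rate L0 L1 P C * (F C - F P))"
    unfolding gen_def by (rule sum.cong) auto
  also have "\<dots> = (\<Sum>C\<in>partitions_upto n. (\<Sum>K\<in>{K\<in>A1. merge P K = C}. h1 K) + (\<Sum>K\<in>{K\<in>A0. merge0 P K = C}. h0 K))"
  proof (rule sum.cong[OF refl])
    fix C
    have e1: "{K. K \<subseteq> nzb P \<and> 2 \<le> card K \<and> merge P K = C} = {K\<in>A1. merge P K = C}" unfolding A1_def by auto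
    have e0: "{K. K \<subseteq> nzb P \<and> 1 \<le> card K \<and> merge0 P K = C} = {K\<in>A0. merge0 P K = C}" unfolding A0_def by auto
    show "rate L0 L1 P C * (F C - F P) = (\<Sum>K\<in>{K\<in>A1. merge P K = C}. h1 K) + (\<Sum>K\<in>{K\<in>A0. merge0 P K = C}. h0 K)"
      unfolding rate_def e1 e0 h1_def h0_def b_def by (simp add: sum_distrib_right distrib_right)
  qed
  also have "\<dots> = (\<Sum>K\<in>A1. h1 K) + (\<Sum>K\<in>A0. h0 K)"
    by (simp add: sum.distrib sum.group[OF finA1 parts_finite img1] sum.group[OF finA0 parts_finite img0])
  also have "\<dots> \<le> (\<Sum>K\<in>A1. lam L1 b (card K) * (- (real (card K - 1) / phi L0 L1 b)))
                + (\<Sum>K\<in>A0. mu L0 b (card K) * (- (real (card K) / phi L0 L1 b)))"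
  proof (intro add_mono sum_mono)
    fix K assume K: "K \<in> A1"
    have cK: "2 \<le> card K" "card K \<le> b" using K finB unfolding A1_def b_def by (auto intro: card_mono)
    have eq: "b - card K + 1 = b - (card K - 1)" using cK by simp
    have "F (merge P K) = f (b - (card K - 1))"
      unfolding F_def merge_props(2)[OF P A1ne[OF K, THEN conjunct1] A1ne[OF K, THEN conjunct2]] b_def[symmetric] eq ..
    moreover have "real (card K - 1) / phi L0 L1 b \<le> f b - f (b - (card K - 1))"
      by (rule f_diff) (use cK in linarith)
    moreover have "F P = f b" unfolding F_def b_def ..
    ultimately have "F (merge P K) - F P \<le> - (real (card K - 1) / phi L0 L1 b)" by linarith
    then show "h1 K \<le> lam L1 b (card K) * (- (real (card K - 1) / phi L0 L1 b))"
      unfolding h1_def by (rule mult_left_mono[OF _ lam_nonneg])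
  next
    fix K assume K: "K \<in> A0"
    have cK: "card K \<le> b" using K finB unfolding A0_def b_def by (auto intro: card_mono)
    have "F (merge0 P K) = f (b - card K)"
      unfolding F_def merge0_props(2)[OF P A0ne[OF K]] b_def[symmetric] ..
    moreover have "real (card K) / phi L0 L1 b \<le> f b - f (b - card K)"
      by (rule f_diff) (use cK in linarith)
    moreover have "F P = f b" unfolding F_def b_def ..
    ultimately have "F (merge0 P K) - F P \<le> - (real (card K) / phi L0 L1 b)" by linarith
    then show "h0 K \<le> mu L0 b (card K) * (- (real (card K) / phi L0 L1 b))"
      unfolding h0_def by (rule mult_left_mono[OF _ mu_nonneg])
  qed
  also have "\<dots> = - (1 / phi L0 L1 b) * ((\<Sum>k=2..b. real (k - 1) * real (b choose k) * lam L1 b k)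
                   + (\<Sum>k=1..b. real k * real (b choose k) * mu L0 b k))"
  proof -
    have s1: "(\<Sum>K\<in>A1. lam L1 b (card K) * (- (real (card K - 1) / phi L0 L1 b)))
        = (\<Sum>k=2..b. real (b choose k) * (lam L1 b k * (- (real (k - 1) / phi L0 L1 b))))"
      unfolding A1_def b_def by (rule group_card[OF finB])
    have s0: "(\<Sum>K\<in>A0. mu L0 b (card K) * (- (real (card K) / phi L0 L1 b)))
        = (\<Sum>k=1..b. real (b choose k) * (mu L0 b k * (- (real k / phi L0 L1 b))))"
      unfolding A0_def b_def by (rule group_card[OF finB])
    have t1: "(\<Sum>k=2..b. real (b choose k) * (lam L1 b k * (- (real (k - 1) / phi L0 L1 b))))
       = - (1 / phi L0 L1 b) * (\<Sum>k=2..b. real (k - 1) * real (b choose k) * lam L1 b k)"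
      unfolding sum_distrib_left by (rule sum.cong[OF refl]) (simp add: field_simps)
    have t0: "(\<Sum>k=1..b. real (b choose k) * (mu L0 b k * (- (real k / phi L0 L1 b))))
       = - (1 / phi L0 L1 b) * (\<Sum>k=1..b. real k * real (b choose k) * mu L0 b k)"
      unfolding sum_distrib_left by (rule sum.cong[OF refl]) (simp add: field_simps)
    show ?thesis unfolding s1 s0 t1 t0 by (simp only: distrib_left)
  qed
  also have "\<dots> = -1"
  proof -
    have "(\<Sum>k=2..b. real (k - 1) * real (b choose k) * lam L1 b k) + real b * measure L0 {0..1} = phi L0 L1 b"
      unfolding phi_def by simp
    then show ?thesis unfolding mu_sum using phib by simp
  qed
  finally show ?thesis using False by simp
qed

end


lemma gpow_Suc_right:
  assumes "P \<in> partitions_upto n" "P' \<in> partitions_upto n"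
  shows "gpow L0 L1 n (Suc k) P P' = (\<Sum>C\<in>partitions_upto n. gpow L0 L1 n k P C * gen L0 L1 n C P')"
  using assms(1)
proof (induction k arbitrary: P)
  case 0
  have "gpow L0 L1 n (Suc 0) P P' = (\<Sum>C\<in>partitions_upto n. gen L0 L1 n P C * (if C = P' then 1 else 0))" by simp
  also have "\<dots> = (\<Sum>C\<in>partitions_upto n. if C = P' then gen L0 L1 n P C else 0)"
    by (intro sum.cong refl) simp
  also have "\<dots> = gen L0 L1 n P P'" using assms(2) parts_finite by (simp add: sum.delta')
  also have "\<dots> = (\<Sum>C\<in>partitions_upto n. if P = C then gen L0 L1 n C P' else 0)"
    using 0 parts_finite by (simp add: sum.delta)
  also have "\<dots> = (\<Sum>C\<in>partitions_upto n. (if P = C then 1 else 0) * gen L0 L1 n C P')"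
    by (intro sum.cong refl) simp
  finally show ?case by simp
next
  case (Suc k)
  have "gpow L0 L1 n (Suc (Suc k)) P P' = (\<Sum>C\<in>partitions_upto n. gen L0 L1 n P C * gpow L0 L1 n (Suc k) C P')" by simp
  also have "\<dots> = (\<Sum>C\<in>partitions_upto n. gen L0 L1 n P C * (\<Sum>D\<in>partitions_upto n. gpow L0 L1 n k C D * gen L0 L1 n D P'))"
    using Suc.IH by (intro sum.cong refl) simp
  also have "\<dots> = (\<Sum>D\<in>partitions_upto n. (\<Sum>C\<in>partitions_upto n. gen L0 L1 n P C * gpow L0 L1 n k C D) * gen L0 L1 n D P')"
    by (simp only: sum_distrib_left sum_distrib_right mult.assoc) (rule sum.swap)
  also have "\<dots> = (\<Sum>D\<in>partitions_upto n. gpow L0 L1 n (Suc k) P D * gen L0 L1 n D P')" by simp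
  finally show ?case .
qed

definition RR :: "real measure \<Rightarrow> real measure \<Rightarrow> nat \<Rightarrow> real" where
  "RR L0 L1 n = (\<Sum>P\<in>partitions_upto n. \<Sum>C\<in>partitions_upto n. \<bar>gen L0 L1 n P C\<bar>)"

lemma RR_row: "P \<in> partitions_upto n \<Longrightarrow> (\<Sum>C\<in>partitions_upto n. \<bar>gen L0 L1 n P C\<bar>) \<le> RR L0 L1 n"
  unfolding RR_def by (rule member_le_sum) (auto intro: sum_nonneg parts_finite)

lemma RR_nonneg: "0 \<le> RR L0 L1 n"
  unfolding RR_def by (auto intro!: sum_nonneg)

lemma gpow_bound:
  assumes "P \<in> partitions_upto n"
  shows "\<bar>gpow L0 L1 n k P P'\<bar> \<le> RR L0 L1 n ^ k"
  using assms
proof (induction k arbitrary: P)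
  case 0 then show ?case by simp
next
  case (Suc k)
  have "\<bar>gpow L0 L1 n (Suc k) P P'\<bar> \<le> (\<Sum>C\<in>partitions_upto n. \<bar>gen L0 L1 n P C\<bar> * \<bar>gpow L0 L1 n k C P'\<bar>)"
    by (simp add: abs_mult[symmetric])
  also have "\<dots> \<le> (\<Sum>C\<in>partitions_upto n. \<bar>gen L0 L1 n P C\<bar> * RR L0 L1 n ^ k)"
    using Suc.IH by (intro sum_mono mult_left_mono) auto
  also have "\<dots> = (\<Sum>C\<in>partitions_upto n. \<bar>gen L0 L1 n P C\<bar>) * RR L0 L1 n ^ k"
    by (simp add: sum_distrib_right)
  also have "\<dots> \<le> RR L0 L1 n * RR L0 L1 n ^ k"
    using RR_row[OF Suc.prems] RR_nonneg by (intro mult_right_mono) auto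
  finally show ?case by simp
qed

definition cc :: "real measure \<Rightarrow> real measure \<Rightarrow> nat \<Rightarrow> nat set set \<Rightarrow> nat set set \<Rightarrow> nat \<Rightarrow> real" where
  "cc L0 L1 n P P' k = gpow L0 L1 n k P P' / fact k"

lemma tp_cc: "trans_prob L0 L1 n t P P' = (\<Sum>k. cc L0 L1 n P P' k * t ^ k)"
  unfolding trans_prob_def cc_def by (simp add: field_simps)

lemma cc_summable:
  assumes "P \<in> partitions_upto n"
  shows "summable (\<lambda>k. cc L0 L1 n P P' k * K ^ k)"
proof (rule summable_comparison_test)
  show "summable (\<lambda>k. inverse (fact k) * (RR L0 L1 n * \<bar>K\<bar>) ^ k)" by (rule summable_exp)
  show "\<exists>N. \<forall>k\<ge>N. norm (cc L0 L1 n P P' k * K ^ k) \<le> inverse (fact k) * (RR L0 L1 n * \<bar>K\<bar>) ^ k"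
  proof (intro exI allI impI)
    fix k :: nat
    have "norm (cc L0 L1 n P P' k * K ^ k) = \<bar>gpow L0 L1 n k P P'\<bar> * \<bar>K\<bar> ^ k / fact k"
      unfolding cc_def by (simp add: abs_mult power_abs)
    also have "\<dots> \<le> RR L0 L1 n ^ k * \<bar>K\<bar> ^ k / fact k"
      using gpow_bound[OF assms] by (intro divide_right_mono mult_right_mono) auto
    finally show "norm (cc L0 L1 n P P' k * K ^ k) \<le> inverse (fact k) * (RR L0 L1 n * \<bar>K\<bar>) ^ k"
      by (simp add: power_mult_distrib field_simps)
  qed
qed

lemma fact_aux: "of_nat (Suc k) * (X / fact (Suc k)) = (X::real) / fact k"
  by (simp add: field_simps del: of_nat_Suc)

lemma diffs_cc: "diffs (cc L0 L1 n P P') k = gpow L0 L1 n (Suc k) P P' / fact k"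
  unfolding diffs_def cc_def by (rule fact_aux)

lemma tp_deriv:
  assumes P: "P \<in> partitions_upto n" and P': "P' \<in> partitions_upto n"
  shows "((\<lambda>t. trans_prob L0 L1 n t P P') has_real_derivative
          (\<Sum>C\<in>partitions_upto n. trans_prob L0 L1 n t P C * gen L0 L1 n C P')) (at t)"
proof -
  have d: "((\<lambda>t. \<Sum>k. cc L0 L1 n P P' k * t ^ k) has_real_derivative
           (\<Sum>k. diffs (cc L0 L1 n P P') k * t ^ k)) (at t)"
    by (rule termdiffs_strong[OF cc_summable[OF P, where K="\<bar>t\<bar> + 1"]]) simp
  have "(\<Sum>k. diffs (cc L0 L1 n P P') k * t ^ k)
      = (\<Sum>k. \<Sum>C\<in>partitions_upto n. cc L0 L1 n P C k * t ^ k * gen L0 L1 n C P')"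
  proof (rule suminf_cong)
    fix k
    have "diffs (cc L0 L1 n P P') k * t ^ k
        = (\<Sum>C\<in>partitions_upto n. gpow L0 L1 n k P C * gen L0 L1 n C P') / fact k * t ^ k"
      unfolding diffs_cc gpow_Suc_right[OF P P'] ..
    also have "\<dots> = (\<Sum>C\<in>partitions_upto n. gpow L0 L1 n k P C * gen L0 L1 n C P' / fact k * t ^ k)"
      by (simp only: sum_divide_distrib sum_distrib_right)
    also have "\<dots> = (\<Sum>C\<in>partitions_upto n. cc L0 L1 n P C k * t ^ k * gen L0 L1 n C P')"
      unfolding cc_def by (intro sum.cong refl) (simp add: field_simps)
    finally show "diffs (cc L0 L1 n P P') k * t ^ k = (\<Sum>C\<in>partitions_upto n. cc L0 L1 n P C k * t ^ k * gen L0 L1 n C P')" .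
  qed
  also have "\<dots> = (\<Sum>C\<in>partitions_upto n. \<Sum>k. cc L0 L1 n P C k * t ^ k * gen L0 L1 n C P')"
    by (rule suminf_sum) (intro summable_mult2 cc_summable[OF P])
  also have "\<dots> = (\<Sum>C\<in>partitions_upto n. trans_prob L0 L1 n t P C * gen L0 L1 n C P')"
    unfolding tp_cc by (intro sum.cong refl suminf_mult2[symmetric] cc_summable[OF P])
  finally show ?thesis using d unfolding tp_cc[abs_def] by simp
qed

lemma tp_zero: "trans_prob L0 L1 n 0 P P' = (if P = P' then 1 else 0)"
  unfolding tp_cc using powser_sums_zero[THEN sums_unique, of "cc L0 L1 n P P'"]
  by (simp add: cc_def)

lemma gpow_rowsum:
  assumes "P \<in> partitions_upto n"
  shows "(\<Sum>P'\<in>partitions_upto n. gpow L0 L1 n k P P') = (if k = 0 then 1 else 0)"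
  using assms
proof (induction k arbitrary: P)
  case 0 then show ?case using parts_finite by (simp add: sum.delta)
next
  case (Suc k)
  have "(\<Sum>P'\<in>partitions_upto n. gpow L0 L1 n (Suc k) P P')
     = (\<Sum>C\<in>partitions_upto n. gen L0 L1 n P C * (\<Sum>P'\<in>partitions_upto n. gpow L0 L1 n k C P'))"
    by (simp only: gpow.simps sum_distrib_left) (rule sum.swap)
  also have "\<dots> = (\<Sum>C\<in>partitions_upto n. gen L0 L1 n P C * (if k = 0 then 1 else 0))"
    using Suc.IH by (intro sum.cong refl) simp
  also have "\<dots> = 0"
    using gen_row0[OF Suc.prems] by (simp add: sum_distrib_right[symmetric])
  finally show ?case by simp
qed



lemma tp_rowsum:
  assumes P: "P \<in> partitions_upto n"
  shows "(\<Sum>P'\<in>partitions_upto n. trans_prob L0 L1 n t P P') = 1"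
proof -
  have "(\<Sum>P'\<in>partitions_upto n. trans_prob L0 L1 n t P P')
      = (\<Sum>P'\<in>partitions_upto n. \<Sum>k. cc L0 L1 n P P' k * t ^ k)" unfolding tp_cc ..
  also have "\<dots> = (\<Sum>k. \<Sum>P'\<in>partitions_upto n. cc L0 L1 n P P' k * t ^ k)"
    by (rule suminf_sum[symmetric]) (rule cc_summable[OF P])
  also have "\<dots> = (\<Sum>k. if k = 0 then 1 else 0)"
  proof (rule suminf_cong)
    fix k
    have "(\<Sum>P'\<in>partitions_upto n. cc L0 L1 n P P' k * t ^ k)
        = (\<Sum>P'\<in>partitions_upto n. gpow L0 L1 n k P P') / fact k * t ^ k"
      unfolding cc_def by (simp only: sum_divide_distrib sum_distrib_right)
    also have "\<dots> = (if k = 0 then 1 else 0)" unfolding gpow_rowsum[OF P] by simp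
    finally show "(\<Sum>P'\<in>partitions_upto n. cc L0 L1 n P P' k * t ^ k) = (if k = 0 then 1 else 0)" .
  qed
  also have "\<dots> = 1" using sums_single[of 0 "\<lambda>_. (1::real)"] by (simp add: sums_iff)
  finally show ?thesis .
qed

locale coalN = coal +
  fixes n :: nat
  assumes tp_nonneg: "\<And>t C. 0 \<le> t \<Longrightarrow> C \<in> partitions_upto n \<Longrightarrow> 0 \<le> trans_prob L0 L1 n t (singletons_upto n) C"
begin

abbreviation "s0 \<equiv> singletons_upto n"
abbreviation "one \<equiv> {{..n}} :: nat set set"
abbreviation "Pn \<equiv> partitions_upto n"
abbreviation "Q \<equiv> gen L0 L1 n"
abbreviation "tp t C \<equiv> trans_prob L0 L1 n t s0 C"

definition p :: "real \<Rightarrow> real" where "p t = tp t one"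
definition g :: "real \<Rightarrow> real" where "g t = (\<Sum>C\<in>Pn. tp t C * F C)"

lemma p_deriv: "(p has_real_derivative (\<Sum>C\<in>Pn. tp t C * Q C one)) (at t)"
  unfolding p_def[abs_def] by (rule tp_deriv[OF s0_parts one_parts])

lemma p_mono: assumes "0 \<le> a" "a \<le> b" shows "p a \<le> p b"
proof (rule DERIV_nonneg_imp_nondecreasing[OF assms(2)])
  fix x assume x: "a \<le> x" "x \<le> b"
  have "0 \<le> (\<Sum>C\<in>Pn. tp x C * Q C one)"
  proof (intro sum_nonneg)
    fix C assume C: "C \<in> Pn"
    have "0 \<le> Q C one"
    proof (cases "C = one")
      case True then show ?thesis using gen_empty[OF nzb_one] by simp
    next
      case False then show ?thesis by (rule gen_offdiag_nonneg)
    qed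
    then show "0 \<le> tp x C * Q C one" using tp_nonneg[of x C] C x assms by simp
  qed
  then show "\<exists>y. (p has_real_derivative y) (at x) \<and> 0 \<le> y" using p_deriv by blast
qed

lemma F_nonneg: "0 \<le> F C" unfolding F_def by (rule f_nonneg)

definition g' :: "real \<Rightarrow> real" where "g' t = (\<Sum>C\<in>Pn. tp t C * (\<Sum>D\<in>Pn. Q C D * F D))"

lemma g_deriv: "(g has_real_derivative g' t) (at t)"
proof -
  have "(g has_real_derivative (\<Sum>D\<in>Pn. (\<Sum>C\<in>Pn. tp t C * Q C D) * F D)) (at t)"
    unfolding g_def[abs_def]
  proof (rule DERIV_sum)
    fix D assume D: "D \<in> Pn"
    show "((\<lambda>x. tp x D * F D) has_real_derivative (\<Sum>C\<in>Pn. tp t C * Q C D) * F D) (at t)"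
      by (rule DERIV_cmult_right) (rule tp_deriv[OF s0_parts D])
  qed
  moreover have "(\<Sum>D\<in>Pn. (\<Sum>C\<in>Pn. tp t C * Q C D) * F D) = g' t"
    unfolding g'_def by (simp only: sum_distrib_left sum_distrib_right mult.assoc) (rule sum.swap)
  ultimately show ?thesis by simp
qed

lemma g'_bound: assumes "0 \<le> t" shows "g' t \<le> - (1 - p t)"
proof -
  have "g' t \<le> (\<Sum>C\<in>Pn. tp t C * (if nzb C = {} then 0 else -1))"
    unfolding g'_def
    by (intro sum_mono mult_left_mono QF_bound tp_nonneg assms)
  also have "\<dots> = (\<Sum>C\<in>Pn. - tp t C + (if C = one then tp t C else 0))"
  proof (intro sum.cong refl)
    fix C assume C: "C \<in> Pn"
    show "tp t C * (if nzb C = {} then 0 else -1) = - tp t C + (if C = one then tp t C else 0)"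
    proof (cases "C = one")
      case True
      then have "nzb C = {}" using nzb_one by simp
      then show ?thesis using True by simp
    next
      case False
      then have "nzb C \<noteq> {}" using nzb_empty_one[OF C] by blast
      then show ?thesis using False by simp
    qed
  qed
  also have "\<dots> = - (\<Sum>C\<in>Pn. tp t C) + tp t one"
  proof -
    have d: "(\<Sum>C\<in>Pn. if C = one then tp t C else 0) = tp t one"
      using sum.delta[OF parts_finite[of n], of one "\<lambda>C. tp t C"] one_parts[of n] by simp
    show ?thesis by (simp only: sum.distrib sum_negf d)
  qed
  also have "\<dots> = - (1 - p t)" unfolding tp_rowsum[OF s0_parts] p_def by simp
  finally show ?thesis .
qed

lemma g_nonneg: "0 \<le> t \<Longrightarrow> 0 \<le> g t"
  unfolding g_def by (intro sum_nonneg mult_nonneg_nonneg tp_nonneg F_nonneg)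

lemma g_zero: "g 0 = f n"
proof -
  have "g 0 = (\<Sum>C\<in>Pn. if s0 = C then F C else 0)"
    unfolding g_def tp_zero by (intro sum.cong refl) simp
  also have "\<dots> = F s0" using s0_parts parts_finite by (simp add: sum.delta)
  finally show ?thesis unfolding F_def card_nzb_s0 .
qed

lemma g_step: assumes "0 \<le> a" "a < b" shows "(b - a) * (1 - p b) \<le> g a - g b"
proof -
  obtain z where z: "a < z" "z < b" "g b - g a = (b - a) * g' z"
    using MVT2[OF assms(2), of g g'] g_deriv by blast
  have "g' z \<le> - (1 - p z)" using g'_bound z assms by simp
  also have "\<dots> \<le> - (1 - p b)" using p_mono[of z b] z assms by simp
  finally have gz: "g' z \<le> - (1 - p b)" .
  have "(b - a) * g' z \<le> (b - a) * (- (1 - p b))" using assms gz by (intro mult_left_mono) auto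
  moreover have "(b - a) * (- (1 - p b)) = - ((b - a) * (1 - p b))" by (simp add: algebra_simps)
  ultimately show ?thesis using z(3) by linarith
qed

lemma riemann: assumes h: "0 < h"
  shows "(\<Sum>j<J. h * (1 - p (real (Suc j) * h))) \<le> f n"
proof -
  have "(\<Sum>j<J. h * (1 - p (real (Suc j) * h))) \<le> g 0 - g (real J * h)"
  proof (induction J)
    case 0 then show ?case by simp
  next
    case (Suc J)
    have "(real (Suc J) * h - real J * h) * (1 - p (real (Suc J) * h)) \<le> g (real J * h) - g (real (Suc J) * h)"
      using h by (intro g_step) (auto simp: algebra_simps)
    then have "h * (1 - p (real (Suc J) * h)) \<le> g (real J * h) - g (real (Suc J) * h)"
      by (simp add: algebra_simps)
    then show ?case using Suc by simp
  qed
  also have "\<dots> \<le> g 0" using g_nonneg[of "real J * h"] h by simp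
  finally show ?thesis unfolding g_zero .
qed

end


lemma restr_mono_Suc:
  assumes "restr (Suc m) Q = {{..Suc m}}" shows "restr m Q = {{..m}}"
proof
  show "restr m Q \<subseteq> {{..m}}"
  proof
    fix x assume "x \<in> restr m Q"
    then obtain B where B: "B \<in> Q" "x = B \<inter> {..m}" "x \<noteq> {}" unfolding restr_def by auto
    then have "B \<inter> {..Suc m} \<noteq> {}" by auto
    then have "B \<inter> {..Suc m} \<in> restr (Suc m) Q" using B(1) unfolding restr_def by auto
    then have e: "B \<inter> {..Suc m} = {..Suc m}" using assms by (metis singletonD)
    have "B \<inter> {..m} = (B \<inter> {..Suc m}) \<inter> {..m}" by auto
    also have "\<dots> = {..m}" unfolding e by auto
    finally have "B \<inter> {..m} = {..m}" .
    then show "x \<in> {{..m}}" using B by auto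
  qed
  show "{{..m}} \<subseteq> restr m Q"
  proof -
    have "{..Suc m} \<in> restr (Suc m) Q" using assms by auto
    then obtain B where B: "B \<in> Q" "{..Suc m} = B \<inter> {..Suc m}" unfolding restr_def by auto
    have "B \<inter> {..m} = (B \<inter> {..Suc m}) \<inter> {..m}" by auto
    also have "\<dots> = {..m}" unfolding B(2)[symmetric] by auto
    finally have "B \<inter> {..m} = {..m}" .
    then have "{..m} \<in> restr m Q" using B(1) unfolding restr_def by (auto intro!: image_eqI[where x=B])
    then show ?thesis by auto
  qed
qed

lemma univ_iff:
  assumes "is_partition UNIV Q"
  shows "Q = {UNIV} \<longleftrightarrow> (\<forall>m. restr m Q = {{..m}})"
proof
  assume "Q = {UNIV}" then show "\<forall>m. restr m Q = {{..m}}" unfolding restr_def by auto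
next
  assume r: "\<forall>m. restr m Q = {{..m}}"
  have p: "{} \<notin> Q" "\<Union>Q = UNIV" "\<forall>B\<in>Q. \<forall>C\<in>Q. B \<noteq> C \<longrightarrow> B \<inter> C = {}"
    using assms unfolding is_partition_def by auto
  obtain B0 where B0: "B0 \<in> Q" "0 \<in> B0" using p(2) by blast
  have "m \<in> B0" for m
  proof -
    have "B0 \<inter> {..m} \<in> restr m Q" using B0 unfolding restr_def by auto
    then have "B0 \<inter> {..m} = {..m}" using r by auto
    then show ?thesis by auto
  qed
  then have U: "B0 = UNIV" by auto
  have "C = B0" if C: "C \<in> Q" for C
  proof (rule ccontr)
    assume "C \<noteq> B0"
    then have "C \<inter> B0 = {}" using p(3) C B0(1) by blast
    then have "C = {}" using U by auto
    then show False using p(1) C by auto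
  qed
  then show "Q = {UNIV}" using B0(1) U by auto
qed

lemma phi_nonneg_gen:
  assumes "lmeas L0" "lmeas L1" shows "0 \<le> phi L0 L1 m"
  unfolding phi_def lam_def
  by (intro add_nonneg_nonneg sum_nonneg mult_nonneg_nonneg lmeas.poly_integral_nonneg[OF assms(2)]) auto



lemma fdd1:
  assumes "is_coalescent L0 L1 M X" "0 \<le> t"
  shows "measure M {\<omega>\<in>space M. restr m (X t \<omega>) = C} = trans_prob L0 L1 m t (singletons_upto m) C"
proof -
  have fdd: "\<And>n ts ss. sorted_wrt (<) ts \<Longrightarrow> (\<forall>t\<in>set ts. 0 \<le> t) \<Longrightarrow> length ss = length ts \<Longrightarrow>
        measure M {\<omega>\<in>space M. \<forall>i<length ts. restr n (X (ts ! i) \<omega>) = ss ! i}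
        = chain_prob L0 L1 n 0 (singletons_upto n) ts ss"
    using assms(1)[unfolded is_coalescent_def, THEN conjunct2, THEN conjunct2, THEN conjunct2] by blast
  have "measure M {\<omega>\<in>space M. \<forall>i<length [t]. restr m (X ([t] ! i) \<omega>) = [C] ! i}
        = chain_prob L0 L1 m 0 (singletons_upto m) [t] [C]"
    by (rule fdd) (use assms(2) in auto)
  moreover have "{\<omega>\<in>space M. \<forall>i<length [t]. restr m (X ([t] ! i) \<omega>) = [C] ! i}
      = {\<omega>\<in>space M. restr m (X t \<omega>) = C}" by auto
  ultimately show ?thesis by simp
qed

lemma key:
  assumes co: "coal L0 L1" and M: "prob_space M" and X: "is_coalescent L0 L1 M X" and h: "0 < h"
  shows "\<exists>G. G \<in> borel_measurable M \<and> (\<forall>\<omega>\<in>space M. fixation_time X \<omega> \<le> G \<omega>)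
     \<and> (\<integral>\<^sup>+\<omega>. G \<omega> \<partial>M) \<le> ennreal h + (\<Sum>n. 1 / ennreal (phi L0 L1 (Suc n)))"
proof -
  define S where "S = (\<Sum>n. 1 / ennreal (phi L0 L1 (Suc n)))"
  have part: "\<And>t \<omega>. 0 \<le> t \<Longrightarrow> \<omega> \<in> space M \<Longrightarrow> is_partition UNIV (X t \<omega>)"
    using X[unfolded is_coalescent_def, THEN conjunct1] by blast
  have meas: "\<And>m t s. 0 \<le> t \<Longrightarrow> {\<omega>\<in>space M. restr m (X t \<omega>) = s} \<in> sets M"
    using X[unfolded is_coalescent_def, THEN conjunct2, THEN conjunct1] by blast
  have inst: "coalN L0 L1 m" for m
  proof (rule coalN.intro[OF co], unfold_locales)
    fix t :: real and C assume "0 \<le> t" "C \<in> partitions_upto m"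
    show "0 \<le> trans_prob L0 L1 m t (singletons_upto m) C"
      using fdd1[OF X \<open>0 \<le> t\<close>, of m C] by (metis measure_nonneg)
  qed
  have fm: "finite_measure M" using M unfolding prob_space_def by simp
  define T where "T j = real (Suc j) * h" for j
  have T0: "0 \<le> T j" for j using h unfolding T_def by simp
  define A where "A j = {\<omega>\<in>space M. X (T j) \<omega> \<noteq> {UNIV}}" for j
  define B where "B m j = {\<omega>\<in>space M. restr m (X (T j) \<omega>) \<noteq> {{..m}}}" for m j
  have B_eq: "B m j = space M - {\<omega>\<in>space M. restr m (X (T j) \<omega>) = {{..m}}}" for m j
    unfolding B_def by auto
  have B_sets: "B m j \<in> sets M" for m j
    unfolding B_eq by (intro sets.Diff sets.top meas T0)
  have A_eq: "A j = (\<Union>m. B m j)" for j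
  proof (rule set_eqI)
    fix \<omega> show "\<omega> \<in> A j \<longleftrightarrow> \<omega> \<in> (\<Union>m. B m j)"
    proof (cases "\<omega> \<in> space M")
      case True
      have iff: "X (T j) \<omega> = {UNIV} \<longleftrightarrow> (\<forall>m. restr m (X (T j) \<omega>) = {{..m}})"
        by (rule univ_iff[OF part[OF T0 True]])
      have "\<omega> \<in> A j \<longleftrightarrow> \<not> (X (T j) \<omega> = {UNIV})" unfolding A_def using True by simp
      also have "\<dots> \<longleftrightarrow> (\<exists>m. restr m (X (T j) \<omega>) \<noteq> {{..m}})" unfolding iff by simp
      also have "\<dots> \<longleftrightarrow> \<omega> \<in> (\<Union>m. B m j)" unfolding B_def using True by simp
      finally show ?thesis .
    next
      case False then show ?thesis unfolding A_def B_def by simp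
    qed
  qed
  have A_sets: "A j \<in> sets M" for j unfolding A_eq using B_sets by auto
  have B_inc: "incseq (\<lambda>m. B m j)" for j
    unfolding B_def by (rule incseq_SucI) (use restr_mono_Suc in auto)
  have emB: "emeasure M (B m j) = ennreal (1 - trans_prob L0 L1 m (T j) (singletons_upto m) {{..m}})" for m j
  proof -
    have "emeasure M (B m j) = ennreal (measure M (B m j))"
      using finite_measure.emeasure_eq_measure[OF fm] .
    also have "measure M (B m j) = 1 - measure M {\<omega>\<in>space M. restr m (X (T j) \<omega>) = {{..m}}}"
      unfolding B_eq by (rule prob_space.prob_compl[OF M meas[OF T0]])
    also have "measure M {\<omega>\<in>space M. restr m (X (T j) \<omega>) = {{..m}}} = trans_prob L0 L1 m (T j) (singletons_upto m) {{..m}}"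
      by (rule fdd1[OF X T0])
    finally show ?thesis .
  qed
  have p_le1: "trans_prob L0 L1 m t (singletons_upto m) {{..m}} \<le> 1" if "0 \<le> t" for m t
    using fdd1[OF X that, of m "{{..m}}"] prob_space.prob_le_1[OF M] by metis
  have emA: "emeasure M (A j) = (SUP m. emeasure M (B m j))" for j
    unfolding A_eq by (rule SUP_emeasure_incseq[symmetric]) (use B_sets B_inc in auto)
  have fS: "ennreal (coal.f L0 L1 m) \<le> S" for m
  proof -
    have pos: "0 < phi L0 L1 (Suc k)" for k using coal.pos[OF co, of "Suc k"] by simp
    have "coal.f L0 L1 m = (\<Sum>k<m. 1 / phi L0 L1 (Suc k))"
      unfolding coal.f_def[OF co] by (simp add: sum.atLeast1_atMost_eq)
    then have "ennreal (coal.f L0 L1 m) = (\<Sum>k<m. ennreal (1 / phi L0 L1 (Suc k)))"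
      using pos by (simp add: sum_ennreal less_imp_le)
    also have "\<dots> = (\<Sum>k<m. 1 / ennreal (phi L0 L1 (Suc k)))"
      using pos by (intro sum.cong refl) (simp add: divide_ennreal[symmetric] less_imp_le)
    also have "\<dots> \<le> S" unfolding S_def by (rule sum_le_suminf) (auto intro: summableI)
    finally show ?thesis .
  qed
  have bound_m: "(\<Sum>j. ennreal h * emeasure M (B m j)) \<le> S" for m
  proof -
    have "(\<Sum>j. ennreal h * emeasure M (B m j)) = (\<Sum>j. ennreal (h * (1 - trans_prob L0 L1 m (T j) (singletons_upto m) {{..m}})))"
      unfolding emB using h p_le1[OF T0] by (intro suminf_cong) (simp add: ennreal_mult)
    also have "\<dots> = (SUP J. \<Sum>j<J. ennreal (h * (1 - trans_prob L0 L1 m (T j) (singletons_upto m) {{..m}})))"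
      by (rule suminf_eq_SUP)
    also have "\<dots> \<le> ennreal (coal.f L0 L1 m)"
    proof (rule SUP_least)
      fix J
      have "(\<Sum>j<J. ennreal (h * (1 - trans_prob L0 L1 m (T j) (singletons_upto m) {{..m}})))
          = ennreal (\<Sum>j<J. h * (1 - trans_prob L0 L1 m (T j) (singletons_upto m) {{..m}}))"
        using h p_le1[OF T0] by (intro sum_ennreal) simp
      also have "\<dots> \<le> ennreal (coal.f L0 L1 m)"
        using coalN.riemann[OF inst[of m] h, where J=J] unfolding coalN.p_def[OF inst[of m]] T_def
        by (intro ennreal_leI) simp
      finally show "(\<Sum>j<J. ennreal (h * (1 - trans_prob L0 L1 m (T j) (singletons_upto m) {{..m}}))) \<le> ennreal (coal.f L0 L1 m)" .
    qed
    also have "\<dots> \<le> S" by (rule fS)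
    finally show ?thesis .
  qed
  have sumA: "(\<Sum>j. ennreal h * emeasure M (A j)) \<le> S"
  proof -
    have "(\<Sum>j. ennreal h * emeasure M (A j)) = (\<Sum>j. SUP m. ennreal h * emeasure M (B m j))"
      unfolding emA by (simp add: SUP_mult_left_ennreal)
    also have "\<dots> = (SUP m. \<Sum>j. ennreal h * emeasure M (B m j))"
    proof (rule ennreal_suminf_SUP_eq)
      fix j show "incseq (\<lambda>m. ennreal h * emeasure M (B m j))"
        using B_inc[of j] B_sets unfolding incseq_def by (auto intro!: mult_left_mono emeasure_mono)
    qed
    also have "\<dots> \<le> S" by (rule SUP_least) (rule bound_m)
    finally show ?thesis .
  qed
  define G where "G \<omega> = ennreal h + (\<Sum>j. ennreal h * indicator (A j) \<omega>)" for \<omega>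
  have sm: "(\<lambda>x. \<Sum>j. ennreal h * indicator (A j) x) \<in> borel_measurable M"
    by (rule borel_measurable_suminf_order[where f="\<lambda>j x. ennreal h * indicator (A j) x"])
       (use A_sets in measurable)
  have G_meas: "G \<in> borel_measurable M"
    unfolding G_def by (intro borel_measurable_add borel_measurable_const sm)
  have nnG: "(\<integral>\<^sup>+\<omega>. G \<omega> \<partial>M) = ennreal h + (\<Sum>j. ennreal h * emeasure M (A j))"
  proof -
    have "(\<integral>\<^sup>+\<omega>. G \<omega> \<partial>M) = (\<integral>\<^sup>+\<omega>. ennreal h \<partial>M) + (\<integral>\<^sup>+\<omega>. (\<Sum>j. ennreal h * indicator (A j) \<omega>) \<partial>M)"
      unfolding G_def by (intro nn_integral_add borel_measurable_const sm)
    also have "(\<integral>\<^sup>+\<omega>. ennreal h \<partial>M) = ennreal h"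
      using prob_space.emeasure_space_1[OF M] by simp
    also have "(\<integral>\<^sup>+\<omega>. (\<Sum>j. ennreal h * indicator (A j) \<omega>) \<partial>M) = (\<Sum>j. \<integral>\<^sup>+\<omega>. ennreal h * indicator (A j) \<omega> \<partial>M)"
      using A_sets by (intro nn_integral_suminf) auto
    also have "\<dots> = (\<Sum>j. ennreal h * emeasure M (A j))"
      using A_sets by (intro suminf_cong) (simp add: nn_integral_cmult_indicator)
    finally show ?thesis .
  qed
  have zG: "fixation_time X \<omega> \<le> G \<omega>" if \<omega>: "\<omega> \<in> space M" for \<omega>
  proof (cases "\<exists>j. X (T j) \<omega> = {UNIV}")
    case False
    then have "\<And>j. indicator (A j) \<omega> = (1::ennreal)" unfolding A_def using \<omega> by simp
    then have "(\<Sum>j. ennreal h * indicator (A j) \<omega>) = (\<Sum>j. ennreal h)" by simp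
    also have "\<dots> = \<top>" using h by (intro summable_iff_suminf_neq_top) (auto simp: summable_const_iff)
    finally have "G \<omega> = \<top>" unfolding G_def by simp
    then show ?thesis by simp
  next
    case True
    define j0 where "j0 = (LEAST j. X (T j) \<omega> = {UNIV})"
    have j0: "X (T j0) \<omega> = {UNIV}" unfolding j0_def by (rule LeastI_ex[OF True])
    have lt: "\<And>j. j < j0 \<Longrightarrow> \<omega> \<in> A j" unfolding A_def j0_def using \<omega> not_less_Least by blast
    have "fixation_time X \<omega> \<le> ennreal (T j0)"
      unfolding fixation_time_def by (rule INF_lower) (use j0 T0 in auto)
    also have "ennreal (T j0) = ennreal h + (\<Sum>j<j0. ennreal h)"
      unfolding T_def using h by (simp add: ennreal_plus[symmetric] ennreal_of_nat_eq_real_of_nat ennreal_mult algebra_simps)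
    also have "(\<Sum>j<j0. ennreal h) = (\<Sum>j<j0. ennreal h * indicator (A j) \<omega>)"
      using lt by (intro sum.cong refl) simp
    also have "\<dots> \<le> (\<Sum>j. ennreal h * indicator (A j) \<omega>)" by (rule sum_le_suminf) (auto intro: summableI)
    finally show ?thesis unfolding G_def by (simp add: add_left_mono)
  qed
  show ?thesis
  proof (intro exI conjI ballI)
    show "G \<in> borel_measurable M" by (rule G_meas)
    show "\<And>\<omega>. \<omega> \<in> space M \<Longrightarrow> fixation_time X \<omega> \<le> G \<omega>" by (rule zG)
    show "(\<integral>\<^sup>+\<omega>. G \<omega> \<partial>M) \<le> ennreal h + (\<Sum>n. 1 / ennreal (phi L0 L1 (Suc n)))"
      unfolding nnG S_def[symmetric] using sumA by (rule add_left_mono)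
  qed
qed



theorem lemma14:
  fixes \<Lambda>0 \<Lambda>1 :: "real measure" and M :: "'w measure" and X :: "real \<Rightarrow> 'w \<Rightarrow> nat set set"
  assumes "finite_measure \<Lambda>0" and "finite_measure \<Lambda>1"
    and "sets \<Lambda>0 = sets borel" and "sets \<Lambda>1 = sets borel"
    and "emeasure \<Lambda>0 (- {0..1}) = 0" and "emeasure \<Lambda>1 (- {0..1}) = 0"
    and "emeasure \<Lambda>0 {1} + emeasure \<Lambda>1 {1} = 0"
    and "prob_space M"
    and "is_coalescent \<Lambda>0 \<Lambda>1 M X"
  shows "(\<integral>\<^sup>+\<omega>. fixation_time X \<omega> \<partial>M) \<le> (\<Sum>n. 1 / ennreal (phi \<Lambda>0 \<Lambda>1 (Suc n)))
    \<and> ((\<Sum>n. 1 / ennreal (phi \<Lambda>0 \<Lambda>1 (Suc n))) < \<infinity> \<longrightarrow> (AE \<omega> in M. fixation_time X \<omega> < \<infinity>))"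
proof -
  have l0: "lmeas \<Lambda>0" by (rule lmeas.intro) (use assms(1,3,5) in auto)
  have l1: "lmeas \<Lambda>1" by (rule lmeas.intro) (use assms(2,4,6) in auto)
  define S where "S = (\<Sum>n. 1 / ennreal (phi \<Lambda>0 \<Lambda>1 (Suc n)))"
  show ?thesis
  proof (cases "\<exists>m. phi \<Lambda>0 \<Lambda>1 (Suc m) = 0")
    case True
    then obtain m where m: "phi \<Lambda>0 \<Lambda>1 (Suc m) = 0" by blast
    have "(\<Sum>n\<in>{m}. 1 / ennreal (phi \<Lambda>0 \<Lambda>1 (Suc n))) \<le> S"
      unfolding S_def by (rule sum_le_suminf) (auto intro: summableI)
    then have "S = \<top>" using m by (simp add: top_unique)
    then show ?thesis unfolding S_def[symmetric] by simp
  next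
    case False
    have pos: "phi \<Lambda>0 \<Lambda>1 m > 0" if m1: "1 \<le> m" for m
    proof -
      obtain k where k: "m = Suc k" using m1 by (cases m) auto
      have "phi \<Lambda>0 \<Lambda>1 m \<noteq> 0" using False k by blast
      moreover have "0 \<le> phi \<Lambda>0 \<Lambda>1 m" by (rule phi_nonneg_gen[OF l0 l1])
      ultimately show ?thesis by simp
    qed
    have co: "coal \<Lambda>0 \<Lambda>1" by (rule coal.intro[OF l0 l1 pos])
    have part1: "(\<integral>\<^sup>+\<omega>. fixation_time X \<omega> \<partial>M) \<le> S"
    proof (rule ennreal_le_epsilon)
      fix e :: real assume e: "0 < e"
      obtain G where G: "G \<in> borel_measurable M" "\<forall>\<omega>\<in>space M. fixation_time X \<omega> \<le> G \<omega>"
        "(\<integral>\<^sup>+\<omega>. G \<omega> \<partial>M) \<le> ennreal e + S"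
        using key[OF co assms(8) assms(9) e] unfolding S_def by blast
      have "(\<integral>\<^sup>+\<omega>. fixation_time X \<omega> \<partial>M) \<le> (\<integral>\<^sup>+\<omega>. G \<omega> \<partial>M)"
        by (rule nn_integral_mono) (use G(2) in auto)
      also have "\<dots> \<le> S + ennreal e" using G(3) by (simp add: add.commute)
      finally show "(\<integral>\<^sup>+\<omega>. fixation_time X \<omega> \<partial>M) \<le> S + ennreal e" .
    qed
    have part2: "AE \<omega> in M. fixation_time X \<omega> < \<infinity>" if fin: "S < \<infinity>"
    proof -
      obtain G where G: "G \<in> borel_measurable M" "\<forall>\<omega>\<in>space M. fixation_time X \<omega> \<le> G \<omega>"
        "(\<integral>\<^sup>+\<omega>. G \<omega> \<partial>M) \<le> ennreal 1 + S"
        using key[OF co assms(8) assms(9), of 1] unfolding S_def by auto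
      have "(\<integral>\<^sup>+\<omega>. G \<omega> \<partial>M) \<noteq> \<infinity>"
        using G(3) fin by (metis ennreal_add_less_top ennreal_less_top infinity_ennreal_def le_less_trans less_le)
      then have "AE \<omega> in M. G \<omega> \<noteq> \<infinity>" by (rule nn_integral_PInf_AE[OF G(1)])
      moreover have "AE \<omega> in M. \<omega> \<in> space M" by (rule AE_space)
      ultimately show ?thesis
      proof eventually_elim
        case (elim \<omega>)
        then have "G \<omega> < \<top>" by (simp add: less_top[symmetric])
        then show ?case using G(2) elim(2) by (metis le_less_trans infinity_ennreal_def)
      qed
    qed
    show ?thesis using part1 part2 unfolding S_def by blast
  qed
qed


end
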